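(* Let $N\ge1$, $p\ge2$, $w,g\in L^1_{loc}(\mathbb{R}^N)$ positive a.e. with $g^{-1}\in L^\infty(\mathbb{R}^N)$. Let $0<\delta<\gamma$ with $(\delta,p)$ in the class $P_a$. Let $u\in C^1(\mathbb{R}^N)$ with $0<u\le1$ in $\mathbb{R}^N$ be a stable weak solution of $\operatorname{div}(w|\nabla u|^{p-2}\nabla u)=g(x)(u^{-\delta}+u^{-\gamma})$ in $\mathbb{R}^N$. Then for every $\beta\in(0,s_p)$ there exists a constant $c>0$, depending on $\beta,p,\delta,m$ but not on $\psi$, such that for every $\psi\in C^1_c(\mathbb{R}^N)$ with $0\le\psi\le1$, $$\int_{\mathbb{R}^N} g\Big(\frac{\psi}{u}\Big)^{2\beta+p-1+\delta}dx\le c\int_{\mathbb{R}^N} w^{\theta_a'}|\nabla\psi|^{p\theta_a'}dx,\qquad \theta_a'=\frac{2\beta+p-1+\delta}{p-1+\delta}.$$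
   Context: Here $m=\|g^{-1}\|_{L^\infty}$. Weak solution and stability are with respect to $f(t)=-t^{-\delta}-t^{-\gamma}$ and the equation $-\operatorname{div}(w|\nabla u|^{p-2}\nabla u)=gf(u)$: $u\in C^1$ is a weak solution if $\int w|\nabla u|^{p-2}\nabla u\cdot\nabla\varphi=\int gf(u)\varphi$ for all $\varphi\in C^1_c(\mathbb{R}^N)$; it is stable if for all $\varphi\in C^1_c(\mathbb{R}^N)$, $\int w|\nabla u|^{p-2}|\nabla\varphi|^2+(p-2)\int w|\nabla u|^{p-4}(\nabla u\cdot\nabla\varphi)^2-\int gf'(u)\varphi^2\ge0$ (middle integrand $=0$ where $\nabla u=0$). Class $P_a$: $(\delta,p)\in P_a$ if either $2\le p<3$ and $\delta\ge1$, or $p=3$ and $\delta>1$, or $p>3$ and $\delta>\frac{(p-1)^2}{4}$. $s_p=\delta+\sqrt{\delta^2+\delta}$ if $p=2$, $s_p=\frac{2\delta}{p-1}-\frac{p-1}{2}$ if $p>2$. *)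

theory Defs
  imports "HOL-Analysis.Analysis" "HOL-Probability.Essential_Supremum"
begin

definition C1_with_grad :: "(real^'n \<Rightarrow> real) \<Rightarrow> (real^'n \<Rightarrow> real^'n) \<Rightarrow> bool" where
  "C1_with_grad f Df \<longleftrightarrow>
     (\<forall>x. (f has_derivative (\<lambda>h. Df x \<bullet> h)) (at x)) \<and> continuous_on UNIV Df"

definition compact_support :: "(real^'n \<Rightarrow> real) \<Rightarrow> bool" where
  "compact_support f \<longleftrightarrow> compact (closure {x. f x \<noteq> 0})"

definition locally_integrable :: "(real^'n \<Rightarrow> real) \<Rightarrow> bool" where
  "locally_integrable f \<longleftrightarrow> (\<forall>K. compact K \<longrightarrow> set_integrable lborel K f)"

text \<open>Power with the convention t^0 = 1 also for t = 0 (used for |grad u|^(p-2)).\<close>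
definition pw :: "real \<Rightarrow> real \<Rightarrow> real" where
  "pw t a = (if a = 0 then 1 else t powr a)"

definition class_Pa :: "real \<Rightarrow> real \<Rightarrow> bool" where
  "class_Pa \<delta> p \<longleftrightarrow> (2 \<le> p \<and> p < 3 \<and> \<delta> \<ge> 1) \<or> (p = 3 \<and> \<delta> > 1) \<or> (p > 3 \<and> \<delta> > (p - 1)^2 / 4)"

definition s_p :: "real \<Rightarrow> real \<Rightarrow> real" where
  "s_p p \<delta> = (if p = 2 then \<delta> + sqrt (\<delta>^2 + \<delta>) else 2 * \<delta> / (p - 1) - (p - 1) / 2)"

definition theta_a' :: "real \<Rightarrow> real \<Rightarrow> real \<Rightarrow> real" where
  "theta_a' \<beta> p \<delta> = (2 * \<beta> + p - 1 + \<delta>) / (p - 1 + \<delta>)"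

text \<open>Weak solution of -div(w|grad u|^(p-2) grad u) = g f(u), f(t) = -t^(-delta) - t^(-gamma).\<close>
definition weak_solution ::
  "real \<Rightarrow> real \<Rightarrow> real \<Rightarrow> (real^'n \<Rightarrow> real) \<Rightarrow> (real^'n \<Rightarrow> real) \<Rightarrow> (real^'n \<Rightarrow> real) \<Rightarrow> (real^'n \<Rightarrow> real^'n) \<Rightarrow> bool" where
  "weak_solution p \<delta> \<gamma> w g u Du \<longleftrightarrow>
     (\<forall>\<phi> D\<phi>. C1_with_grad \<phi> D\<phi> \<and> compact_support \<phi> \<longrightarrow>
        (\<integral>x. w x * pw (norm (Du x)) (p - 2) * (Du x \<bullet> D\<phi> x) \<partial>lborel)
        = (\<integral>x. g x * (- (u x powr (-\<delta>)) - u x powr (-\<gamma>)) * \<phi> x \<partial>lborel))"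

text \<open>Stability; f'(t) = delta t^(-delta-1) + gamma t^(-gamma-1); middle integrand 0 where grad u = 0.\<close>
definition stable_sol ::
  "real \<Rightarrow> real \<Rightarrow> real \<Rightarrow> (real^'n \<Rightarrow> real) \<Rightarrow> (real^'n \<Rightarrow> real) \<Rightarrow> (real^'n \<Rightarrow> real) \<Rightarrow> (real^'n \<Rightarrow> real^'n) \<Rightarrow> bool" where
  "stable_sol p \<delta> \<gamma> w g u Du \<longleftrightarrow>
     (\<forall>\<phi> D\<phi>. C1_with_grad \<phi> D\<phi> \<and> compact_support \<phi> \<longrightarrow>
        (\<integral>x. w x * pw (norm (Du x)) (p - 2) * (norm (D\<phi> x))^2 \<partial>lborel)
        + (p - 2) * (\<integral>x. (if Du x = 0 then 0
                           else w x * norm (Du x) powr (p - 4) * (Du x \<bullet> D\<phi> x)^2) \<partial>lborel)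
        - (\<integral>x. g x * (\<delta> * u x powr (-\<delta> - 1) + \<gamma> * u x powr (-\<gamma> - 1)) * (\<phi> x)^2 \<partial>lborel)
        \<ge> 0)"

end

theory Submission
  imports Defs
begin


lemma li_measurable:
  fixes w :: "real^'n \<Rightarrow> real"
  assumes "locally_integrable w"
  shows "w \<in> borel_measurable lborel"
proof (rule borel_measurable_LIMSEQ_real[where u="\<lambda>i x. indicator (cball 0 (real i)) x *\<^sub>R w x"])
  fix x :: "real^'n"
  obtain n0 :: nat where "norm x \<le> real n0" using real_arch_simple by blast
  have "eventually (\<lambda>i. indicator (cball 0 (real i)) x *\<^sub>R w x = w x) sequentially"
    unfolding eventually_sequentially
    by (rule exI[of _ n0]) (use \<open>norm x \<le> real n0\<close> in \<open>auto simp: indicator_def dist_norm\<close>)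
  then show "(\<lambda>i. indicator (cball 0 (real i)) x *\<^sub>R w x) \<longlonglongrightarrow> w x"
    by (rule tendsto_eventually)
next
  fix i :: nat
  have "set_integrable lborel (cball 0 (real i)) w"
    using assms unfolding locally_integrable_def by auto
  then show "(\<lambda>x. indicator (cball 0 (real i)) x *\<^sub>R w x) \<in> borel_measurable lborel"
    unfolding set_integrable_def by (rule borel_measurable_integrable)
qed

lemma li_integrable:
  fixes w h G :: "real^'n \<Rightarrow> real"
  assumes "locally_integrable w" "continuous_on UNIV G" "compact K"
    "h \<in> borel_measurable lborel" "\<And>x. \<bar>h x\<bar> \<le> \<bar>w x\<bar> * \<bar>G x\<bar>" "\<And>x. x \<notin> K \<Longrightarrow> h x = 0"
  shows "integrable lborel h"
proof -
  have "compact (G ` K)" using assms(2,3) compact_continuous_image continuous_on_subset by blast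
  then obtain B where B: "\<And>x. x \<in> K \<Longrightarrow> \<bar>G x\<bar> \<le> B"
    using compact_imp_bounded bounded_real by (metis image_eqI)
  have i1: "integrable lborel (\<lambda>x. indicator K x *\<^sub>R w x)"
    using assms(1,3) unfolding locally_integrable_def set_integrable_def by auto
  have i2: "integrable lborel (\<lambda>x. B * (indicator K x *\<^sub>R w x))"
    using i1 by (rule integrable_mult_right)
  show ?thesis
  proof (rule Bochner_Integration.integrable_bound[OF i2 assms(4)])
    show "AE x in lborel. norm (h x) \<le> norm (B * (indicator K x *\<^sub>R w x))"
    proof (rule AE_I2)
      fix x
      show "norm (h x) \<le> norm (B * (indicator K x *\<^sub>R w x))"
      proof (cases "x \<in> K")
        case True
        have "\<bar>h x\<bar> \<le> \<bar>w x\<bar> * \<bar>G x\<bar>" by (rule assms(5))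
        also have "\<dots> \<le> \<bar>w x\<bar> * \<bar>B\<bar>" using B[OF True] by (intro mult_left_mono) auto
        also have "\<dots> = \<bar>B * w x\<bar>" by (simp add: abs_mult)
        finally show ?thesis using True by simp
      next
        case False then show ?thesis using assms(6) by simp
      qed
    qed
  qed
qed

lemma li_integrable_mult:
  fixes w G :: "real^'n \<Rightarrow> real"
  assumes "locally_integrable w" "continuous_on UNIV G" "compact K"
    "\<And>x. x \<notin> K \<Longrightarrow> G x = 0"
  shows "integrable lborel (\<lambda>x. w x * G x)"
proof (rule li_integrable[OF assms(1,2,3)])
  have "w \<in> borel_measurable lborel" by (rule li_measurable[OF assms(1)])
  moreover have "G \<in> borel_measurable lborel" using borel_measurable_continuous_onI[OF assms(2)] by simp
  ultimately show "(\<lambda>x. w x * G x) \<in> borel_measurable lborel" by measurable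
qed (auto simp: abs_mult assms(4))

lemma C1_cont: "C1_with_grad f Df \<Longrightarrow> continuous_on UNIV f"
  unfolding C1_with_grad_def
  by (meson continuous_at_imp_continuous_on has_derivative_continuous)

lemma C1_mult:
  assumes "C1_with_grad f Df" "C1_with_grad g Dg"
  shows "C1_with_grad (\<lambda>x. f x * g x) (\<lambda>x. f x *\<^sub>R Dg x + g x *\<^sub>R Df x)"
proof -
  have cf: "continuous_on UNIV f" "continuous_on UNIV g" using assms C1_cont by auto
  have "((\<lambda>x. f x * g x) has_derivative (\<lambda>h. (f x *\<^sub>R Dg x + g x *\<^sub>R Df x) \<bullet> h)) (at x)" for x
  proof -
    have "((\<lambda>x. f x * g x) has_derivative (\<lambda>h. f x * (Dg x \<bullet> h) + (Df x \<bullet> h) * g x)) (at x)"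
      using assms unfolding C1_with_grad_def by (auto intro!: has_derivative_mult)
    then show ?thesis by (simp add: inner_add_left algebra_simps)
  qed
  moreover have "continuous_on UNIV (\<lambda>x. f x *\<^sub>R Dg x + g x *\<^sub>R Df x)"
    using assms cf unfolding C1_with_grad_def by (auto intro!: continuous_intros)
  ultimately show ?thesis unfolding C1_with_grad_def by blast
qed

lemma C1_powr_pos:
  assumes "C1_with_grad u Du" "\<And>x. u x > 0"
  shows "C1_with_grad (\<lambda>x. u x powr a) (\<lambda>x. (a * u x powr (a - 1)) *\<^sub>R Du x)"
proof -
  have cu: "continuous_on UNIV u" using assms C1_cont by auto
  have "((\<lambda>x. u x powr a) has_derivative (\<lambda>h. ((a * u x powr (a - 1)) *\<^sub>R Du x) \<bullet> h)) (at x)" for x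
  proof -
    have d: "(u has_derivative (\<lambda>h. Du x \<bullet> h)) (at x)" using assms unfolding C1_with_grad_def by auto
    have "((\<lambda>x. u x powr a) has_derivative (\<lambda>h. (u x powr a) * (0 * ln (u x) + (Du x \<bullet> h) * a / u x))) (at x)"
      by (rule has_derivative_powr[OF d has_derivative_const assms(2)]) simp
    moreover have "(\<lambda>h. (u x powr a) * (0 * ln (u x) + (Du x \<bullet> h) * a / u x)) = (\<lambda>h. ((a * u x powr (a - 1)) *\<^sub>R Du x) \<bullet> h)"
      using assms(2)[of x] by (auto simp: powr_diff field_simps)
    ultimately show ?thesis by metis
  qed
  moreover have "continuous_on UNIV (\<lambda>x. (a * u x powr (a - 1)) *\<^sub>R Du x)"
    using assms cu unfolding C1_with_grad_def by (auto intro!: continuous_intros simp: less_imp_neq[symmetric])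
  ultimately show ?thesis unfolding C1_with_grad_def by blast
qed

lemma abs_powr_deriv:
  fixes k :: real assumes k: "k > 1"
  shows "((\<lambda>t. \<bar>t\<bar> powr k) has_real_derivative (k * sgn t * \<bar>t\<bar> powr (k - 1))) (at t)"
proof (cases "t = 0")
  case True
  have "((\<lambda>y. (\<bar>y\<bar> powr k - \<bar>0\<bar> powr k) / (y - 0)) \<longlongrightarrow> 0) (at 0)"
  proof (rule tendsto_rabs_zero_cancel)
    have "((\<lambda>y. \<bar>y\<bar> powr (k - 1)) \<longlongrightarrow> 0) (at (0::real))"
      using k by (auto intro!: tendsto_zero_powrI tendsto_eq_intros)
    moreover have "eventually (\<lambda>y. \<bar>y\<bar> powr (k - 1) = \<bar>(\<bar>y\<bar> powr k - \<bar>0\<bar> powr k) / (y - 0)\<bar>) (at (0::real))"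
      unfolding eventually_at_filter by (rule always_eventually) (use k in \<open>auto simp: powr_diff abs_divide\<close>)
    ultimately show "((\<lambda>y. \<bar>(\<bar>y\<bar> powr k - \<bar>0\<bar> powr k) / (y - 0)\<bar>) \<longlongrightarrow> 0) (at 0)"
      by (rule Lim_transform_eventually)
  qed
  then show ?thesis using True k by (simp add: has_field_derivative_iff)
next
  case False
  show ?thesis
  proof (cases "t > 0")
    case True
    have "((\<lambda>t. t powr k) has_real_derivative (k * t powr (k - 1))) (at t)"
      using True by (rule has_real_derivative_powr)
    moreover have "eventually (\<lambda>y. y powr k = \<bar>y\<bar> powr k) (nhds t)"
      using eventually_nhds_in_open[of "{0<..}" t] True
      by (auto elim!: eventually_mono)
    ultimately show ?thesis using True
      by (subst DERIV_cong_ev[OF refl _ refl, symmetric]) auto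
  next
    case neg: False
    then have "t < 0" using False by auto
    have "((\<lambda>y. (- y) powr k) has_real_derivative (k * (- t) powr (k - 1) * (- 1))) (at t)"
      using \<open>t < 0\<close> by (auto intro!: derivative_eq_intros)
    moreover have "eventually (\<lambda>y. (- y) powr k = \<bar>y\<bar> powr k) (nhds t)"
      using eventually_nhds_in_open[of "{..<0}" t] \<open>t < 0\<close>
      by (auto elim!: eventually_mono)
    ultimately show ?thesis using \<open>t < 0\<close>
      by (subst DERIV_cong_ev[OF refl _ refl, symmetric]) auto
  qed
qed

lemma C1_powr_nonneg:
  assumes "C1_with_grad f Df" "\<And>x. f x \<ge> 0" "k > 1"
  shows "C1_with_grad (\<lambda>x. f x powr k) (\<lambda>x. (k * f x powr (k - 1)) *\<^sub>R Df x)"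
proof -
  have cf: "continuous_on UNIV f" using assms C1_cont by auto
  have "((\<lambda>x. f x powr k) has_derivative (\<lambda>h. ((k * f x powr (k - 1)) *\<^sub>R Df x) \<bullet> h)) (at x)" for x
  proof -
    have d: "(f has_derivative (\<lambda>h. Df x \<bullet> h)) (at x)" using assms unfolding C1_with_grad_def by auto
    have H: "((\<lambda>t. \<bar>t\<bar> powr k) has_derivative (\<lambda>h. (k * sgn (f x) * \<bar>f x\<bar> powr (k - 1)) * h)) (at (f x))"
      using abs_powr_deriv[OF assms(3), of "f x"] by (simp add: has_field_derivative_def)
    have "((\<lambda>x. \<bar>f x\<bar> powr k) has_derivative (\<lambda>h. (k * sgn (f x) * \<bar>f x\<bar> powr (k - 1)) * (Df x \<bullet> h))) (at x)"
      using has_derivative_compose[OF d H] by simp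
    moreover have "(\<lambda>h. (k * sgn (f x) * \<bar>f x\<bar> powr (k - 1)) * (Df x \<bullet> h)) = (\<lambda>h. ((k * f x powr (k - 1)) *\<^sub>R Df x) \<bullet> h)"
      using assms(2)[of x] by (cases "f x = 0") auto
    moreover have "(\<lambda>x. \<bar>f x\<bar> powr k) = (\<lambda>x. f x powr k)" using assms(2) by auto
    ultimately show ?thesis by metis
  qed
  moreover have "continuous_on UNIV (\<lambda>x. (k * f x powr (k - 1)) *\<^sub>R Df x)"
    using assms cf unfolding C1_with_grad_def by (auto intro!: continuous_intros continuous_on_powr')
  ultimately show ?thesis unfolding C1_with_grad_def by blast
qed



lemma pw_pos: "Y > 0 \<Longrightarrow> pw Y a = Y powr a" by (simp add: pw_def)

lemma core_ineq:
  fixes p \<kappa> c1 c2 Y V :: real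
  assumes p: "p \<ge> 2" and k: "\<kappa> > 0" and c: "c1 \<ge> 0" "c2 \<ge> 0" and YV: "Y \<ge> 0" "V \<ge> 0"
  defines "R \<equiv> max 1 ((c1 + c2) / \<kappa>)"
  shows "- \<kappa> * Y powr p + c1 * Y powr (p - 1) * V + c2 * pw Y (p - 2) * V\<^sup>2
         \<le> (c1 * R powr (p - 1) + c2 * R powr (p - 2)) * V powr p"
proof -
  have R1: "R \<ge> 1" unfolding R_def by simp
  have Cnn: "c1 * R powr (p - 1) + c2 * R powr (p - 2) \<ge> 0" using c by simp
  have c2le: "c2 \<le> c1 * R powr (p - 1) + c2 * R powr (p - 2)" if "p = 2" using c that R1 by simp
  show ?thesis
  proof (cases "Y = 0")
    case Y0: True
    show ?thesis
    proof (cases "p = 2")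
      case True
      have "V\<^sup>2 = V powr p" using True YV by (simp add: powr_numeral)
      then show ?thesis using Y0 True c2le[OF True] c YV by (simp add: pw_def mult_right_mono)
    next
      case False
      then show ?thesis using Y0 p Cnn YV by (simp add: pw_def)
    qed
  next
    case False
    then have Yp: "Y > 0" using YV by simp
    show ?thesis
    proof (cases "V = 0")
      case True
      then show ?thesis using Yp k by (simp add: powr_gt_zero)
    next
      case False
      then have Vp: "V > 0" using YV by simp
      define r where "r = Y / V"
      have rp: "r > 0" using Yp Vp by (simp add: r_def)
      have Y: "Y = r * V" using Vp by (simp add: r_def)
      have e1: "Y powr p = r powr p * V powr p" using Y rp Vp by (simp add: powr_mult)
      have e2: "Y powr (p - 1) * V = r powr (p - 1) * V powr p"
        using Y rp Vp by (simp add: powr_mult powr_diff)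
      have e3: "pw Y (p - 2) * V\<^sup>2 = r powr (p - 2) * V powr p"
        using Y rp Vp Yp by (simp add: pw_pos powr_mult powr_diff power2_eq_square)
      have main: "- \<kappa> * r powr p + c1 * r powr (p - 1) + c2 * r powr (p - 2)
                  \<le> c1 * R powr (p - 1) + c2 * R powr (p - 2)"
      proof (cases "r \<le> R")
        case True
        have "r powr (p - 1) \<le> R powr (p - 1)" using True rp p by (intro powr_mono2) auto
        then have a1: "c1 * r powr (p - 1) \<le> c1 * R powr (p - 1)" using c by (intro mult_left_mono) auto
        have "r powr (p - 2) \<le> R powr (p - 2)" using True rp p by (intro powr_mono2) auto
        then have a2: "c2 * r powr (p - 2) \<le> c2 * R powr (p - 2)" using c by (intro mult_left_mono) auto
        have "\<kappa> * r powr p \<ge> 0" using k by simp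
        then show ?thesis using a1 a2 by linarith
      next
        case False
        then have rR: "r > R" by simp
        then have r1: "r \<ge> 1" using R1 by simp
        have "r \<ge> (c1 + c2) / \<kappa>" using rR unfolding R_def by simp
        then have rk: "c1 + c2 \<le> \<kappa> * r" using k by (simp add: field_simps)
        have "r powr (p - 2) \<le> r powr (p - 1)" using r1 by (intro powr_mono) auto
        then have "c1 * r powr (p - 1) + c2 * r powr (p - 2) \<le> (c1 + c2) * r powr (p - 1)"
          using c by (simp add: algebra_simps mult_left_mono)
        also have "\<dots> \<le> (\<kappa> * r) * r powr (p - 1)" using rk by (simp add: mult_right_mono)
        also have "\<dots> = \<kappa> * r powr p" using rp by (simp add: powr_diff field_simps)
        finally show ?thesis using Cnn by simp
      qed
      have "- \<kappa> * Y powr p + c1 * Y powr (p - 1) * V + c2 * pw Y (p - 2) * V\<^sup>2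
            = (- \<kappa> * r powr p + c1 * r powr (p - 1) + c2 * r powr (p - 2)) * V powr p"
        using e1 e2 e3 by (simp add: algebra_simps)
      also have "\<dots> \<le> (c1 * R powr (p - 1) + c2 * R powr (p - 2)) * V powr p"
        using main by (rule mult_right_mono) simp
      finally show ?thesis .
    qed
  qed
qed



lemma eq_by_ln: "(0::real) < A \<Longrightarrow> 0 < B \<Longrightarrow> ln A = ln B \<Longrightarrow> A = B" by simp

lemma ids:
  fixes U P p \<alpha> \<beta> q k \<delta> :: real
  assumes U: "U > 0" and P: "P > 0" and p: "p \<ge> 2" and al: "\<alpha> = \<beta> + (p - 2) / 2"
    and q: "q = 2 * \<beta> + p - 1 + \<delta>" and kq: "k = q / 2" and k: "k > 0"
  defines "X \<equiv> U powr (-(2*\<alpha>+2)/p) * P powr (q/p)"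
    and "Z \<equiv> U powr (-2*\<beta>/p) * P powr ((q-p)/p)"
  shows "X powr p = U powr (-2*\<alpha>-2) * (P powr k)\<^sup>2"
    and "U powr (-2*\<alpha>-1) * P powr k * (k * P powr (k - 1)) = k * X powr (p - 1) * Z"
    and "U powr (-2*\<alpha>) * (k * P powr (k - 1))\<^sup>2 = k\<^sup>2 * X powr (p - 2) * Z\<^sup>2"
    and "Z powr p = U powr (-2*\<beta>) * P powr (q - p)"
proof -
  have p0: "p \<noteq> 0" using p by simp
  have b: "\<beta> = \<alpha> - (p - 2) / 2" using al by simp
  show "X powr p = U powr (-2*\<alpha>-2) * (P powr k)\<^sup>2"
    unfolding X_def 
    apply (rule eq_by_ln) using U P k apply simp using U P k apply simp
    using U P k apply (simp add: ln_mult ln_powr power2_eq_square)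
    unfolding kq using p0 by (simp add: field_simps)
  show "U powr (-2*\<alpha>-1) * P powr k * (k * P powr (k - 1)) = k * X powr (p - 1) * Z"
    unfolding X_def Z_def
    apply (rule eq_by_ln) using U P k apply simp using U P k apply simp
    using U P k apply (simp add: ln_mult ln_powr)
    unfolding kq q b using p0 by (simp add: field_simps)
  show "U powr (-2*\<alpha>) * (k * P powr (k - 1))\<^sup>2 = k\<^sup>2 * X powr (p - 2) * Z\<^sup>2"
    unfolding X_def Z_def
    apply (rule eq_by_ln) using U P k apply simp using U P k apply simp
    using U P k apply (simp add: ln_mult ln_powr power2_eq_square)
    unfolding kq q b using p0 by (simp add: field_simps)
  show "Z powr p = U powr (-2*\<beta>) * P powr (q - p)"
    unfolding Z_def
    apply (rule eq_by_ln) using U P k apply simp using U P k apply simp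
    using U P k apply (simp add: ln_mult ln_powr)
    using p0 by (simp add: field_simps)
qed



lemma pwN2: "p \<ge> 2 \<Longrightarrow> N \<ge> 0 \<Longrightarrow> pw N (p - 2) * N\<^sup>2 = N powr p"
  by (cases "N = 0") (auto simp: pw_def powr_diff power2_eq_square powr_numeral)

lemma pwN1: "p \<ge> 2 \<Longrightarrow> N \<ge> 0 \<Longrightarrow> pw N (p - 2) * N = N powr (p - 1)"
  by (cases "N = 0") (auto simp: pw_def powr_diff power2_eq_square)

lemma pw_mult: "p \<ge> 2 \<Longrightarrow> X > 0 \<Longrightarrow> N \<ge> 0 \<Longrightarrow> pw (X * N) (p - 2) = X powr (p - 2) * pw N (p - 2)"
  by (cases "N = 0") (auto simp: pw_def powr_mult)

lemma alg: fixes p W M A e B \<alpha> D \<eta> s E N t :: real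
  shows "(p-1)*(W*M*(A*e\<^sup>2*B\<^sup>2 - 2*\<alpha>*D*\<eta>*e* s + \<alpha>\<^sup>2*E*\<eta>\<^sup>2*N\<^sup>2)) + t*(W*M*(2*D*\<eta>*e* s - (2*\<alpha>+1)*E*\<eta>\<^sup>2*N\<^sup>2))
   = W*M*((p-1)*(A*e\<^sup>2)*B\<^sup>2 + (2*t-2*(p-1)*\<alpha>)*(D*\<eta>*e)* s - (t*(2*\<alpha>+1)-(p-1)*\<alpha>\<^sup>2)*(E*\<eta>\<^sup>2)*N\<^sup>2)"
  by (simp add: algebra_simps)

lemma Wpart:
  fixes a b :: "'v::real_inner" and U P W t p \<alpha> \<beta> q k \<delta> \<kappa> :: real
  assumes U: "U > 0" and P: "P \<ge> 0" and W: "W \<ge> 0" and p: "p \<ge> 2" and al: "\<alpha> = \<beta> + (p - 2) / 2"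
    and q: "q = 2 * \<beta> + p - 1 + \<delta>" and kq: "k = q / 2" and k: "k > 1"
    and ka: "\<kappa> = t * (2*\<alpha>+1) - (p-1) * \<alpha>\<^sup>2" and kp: "\<kappa> > 0"
  defines "c1 \<equiv> \<bar>2*t - 2*(p-1)*\<alpha>\<bar> * k" and "c2 \<equiv> (p - 1) * k\<^sup>2"
  defines "R \<equiv> max 1 ((c1 + c2) / \<kappa>)"
  defines "CW \<equiv> c1 * R powr (p - 1) + c2 * R powr (p - 2)"
  shows "(p - 1) * (W * pw (norm a) (p - 2) * (norm (U powr (-\<alpha>) *\<^sub>R ((k * P powr (k - 1)) *\<^sub>R b) + P powr k *\<^sub>R ((-\<alpha> * U powr (-\<alpha> - 1)) *\<^sub>R a)))\<^sup>2)
     + t * (W * pw (norm a) (p - 2) * (a \<bullet> (U powr (-2*\<alpha>-1) *\<^sub>R (P powr k *\<^sub>R ((k * P powr (k - 1)) *\<^sub>R b) + P powr k *\<^sub>R ((k * P powr (k - 1)) *\<^sub>R b)) + (P powr k * P powr k) *\<^sub>R (((-2*\<alpha>-1) * U powr (-2*\<alpha>-1-1)) *\<^sub>R a))))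
     \<le> W * CW * (U powr (-2*\<beta>) * P powr (q - p) * norm b powr p)"
proof (cases "P = 0")
  case True
  have "CW \<ge> 0" unfolding CW_def c1_def c2_def using p k by simp
  then show ?thesis using True k W by simp
next
  case False
  then have Pp: "P > 0" using P by simp
  define N where "N = norm a"
  define B where "B = norm b"
  define s where "s = a \<bullet> b"
  define \<eta> where "\<eta> = P powr k"
  define e where "e = k * P powr (k - 1)"
  define M where "M = pw N (p - 2)"
  define L1 where "L1 = U powr (-2*\<alpha>) * e\<^sup>2"
  define L2 where "L2 = U powr (-2*\<alpha>-1) * \<eta> * e"
  define L3 where "L3 = U powr (-2*\<alpha>-2) * \<eta>\<^sup>2"
  have Nn: "N \<ge> 0" "B \<ge> 0" by (auto simp: N_def B_def)
  have Mn: "M \<ge> 0" by (simp add: M_def pw_def)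
  have L2n: "L2 \<ge> 0" using k by (simp add: L2_def \<eta>_def e_def)
  have u1: "U powr (-\<alpha>) * U powr (-\<alpha>) = U powr (-2*\<alpha>)" using U by (simp add: powr_add[symmetric])
  have u2: "U powr (-\<alpha>) * U powr (-\<alpha>-1) = U powr (-2*\<alpha>-1)" using U by (simp add: powr_add[symmetric])
  have u3: "U powr (-\<alpha>-1) * U powr (-\<alpha>-1) = U powr (-2*\<alpha>-2)" using U by (simp add: powr_add[symmetric])
  have u4: "U powr (-2*\<alpha>-1-1) = U powr (-2*\<alpha>-2)" by (simp add: algebra_simps)
  have n2: "(norm (U powr (-\<alpha>) *\<^sub>R (e *\<^sub>R b) + \<eta> *\<^sub>R ((-\<alpha> * U powr (-\<alpha> - 1)) *\<^sub>R a)))\<^sup>2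
     = (U powr (-\<alpha>) * U powr (-\<alpha>)) * e\<^sup>2 * B\<^sup>2 - 2 * \<alpha> * (U powr (-\<alpha>) * U powr (-\<alpha>-1)) * \<eta> * e * s
       + \<alpha>\<^sup>2 * (U powr (-\<alpha>-1) * U powr (-\<alpha>-1)) * \<eta>\<^sup>2 * N\<^sup>2"
    unfolding N_def B_def s_def power2_norm_eq_inner
    by (simp add: inner_add_left inner_add_right inner_commute[of b a] algebra_simps power2_eq_square)
  have ip: "a \<bullet> (U powr (-2*\<alpha>-1) *\<^sub>R (\<eta> *\<^sub>R (e *\<^sub>R b) + \<eta> *\<^sub>R (e *\<^sub>R b)) + (\<eta> * \<eta>) *\<^sub>R (((-2*\<alpha>-1) * U powr (-2*\<alpha>-1-1)) *\<^sub>R a))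
     = 2 * U powr (-2*\<alpha>-1) * \<eta> * e * s - (2*\<alpha>+1) * U powr (-2*\<alpha>-2) * \<eta>\<^sup>2 * N\<^sup>2"
    unfolding N_def s_def u4 power2_norm_eq_inner
    by (simp add: inner_add_left inner_add_right algebra_simps power2_eq_square)
  have sb: "(2*t - 2*(p-1)*\<alpha>) * L2 * s \<le> \<bar>2*t - 2*(p-1)*\<alpha>\<bar> * L2 * (N * B)"
  proof -
    have "\<bar>s\<bar> \<le> N * B" unfolding s_def N_def B_def by (rule Cauchy_Schwarz_ineq2)
    then have "\<bar>2*t - 2*(p-1)*\<alpha>\<bar> * \<bar>s\<bar> \<le> \<bar>2*t - 2*(p-1)*\<alpha>\<bar> * (N * B)"
      by (intro mult_left_mono) auto
    moreover have "(2*t - 2*(p-1)*\<alpha>) * s \<le> \<bar>2*t - 2*(p-1)*\<alpha>\<bar> * \<bar>s\<bar>"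
      using abs_ge_self[of "(2*t - 2*(p-1)*\<alpha>) * s"] by (simp add: abs_mult)
    ultimately have "(2*t - 2*(p-1)*\<alpha>) * s \<le> \<bar>2*t - 2*(p-1)*\<alpha>\<bar> * (N * B)" by linarith
    then have "L2 * ((2*t - 2*(p-1)*\<alpha>) * s) \<le> L2 * (\<bar>2*t - 2*(p-1)*\<alpha>\<bar> * (N * B))"
      using L2n by (rule mult_left_mono)
    then show ?thesis by (simp add: mult_ac)
  qed
  define X where "X = U powr (-(2*\<alpha>+2)/p) * P powr (q/p)"
  define Z where "Z = U powr (-2*\<beta>/p) * P powr ((q-p)/p)"
  have Xp: "X > 0" using U Pp by (simp add: X_def)
  have Zp: "Z > 0" using U Pp by (simp add: Z_def)
  note I = ids[OF U Pp p al q kq, folded X_def Z_def]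
  have k0: "k > 0" using k by simp
  define Y where "Y = X * N"
  define V where "V = Z * B"
  have Yn: "Y \<ge> 0" "V \<ge> 0" using Xp Zp Nn by (auto simp: Y_def V_def)
  have i1: "M * L3 * N\<^sup>2 = Y powr p"
  proof -
    have "M * L3 * N\<^sup>2 = L3 * (M * N\<^sup>2)" by simp
    also have "\<dots> = X powr p * N powr p" unfolding M_def pwN2[OF p Nn(1)] L3_def \<eta>_def I(1)[OF k0] ..
    finally show ?thesis using Xp Nn by (simp add: Y_def powr_mult)
  qed
  have i2: "M * L2 * (N * B) = k * Y powr (p - 1) * V"
  proof -
    have "M * L2 * (N * B) = L2 * (M * N) * B" by simp
    also have "\<dots> = k * X powr (p - 1) * Z * N powr (p - 1) * B" unfolding M_def pwN1[OF p Nn(1)] L2_def \<eta>_def e_def I(2)[OF k0] by simp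
    finally show ?thesis using Xp Nn by (simp add: Y_def V_def powr_mult mult_ac)
  qed
  have i3: "M * L1 * B\<^sup>2 = k\<^sup>2 * pw Y (p - 2) * V\<^sup>2"
  proof -
    have "M * L1 * B\<^sup>2 = k\<^sup>2 * X powr (p - 2) * Z\<^sup>2 * M * B\<^sup>2" unfolding L1_def e_def I(3)[OF k0] by simp
    moreover have "pw Y (p - 2) = X powr (p - 2) * M" using pw_mult[OF p Xp Nn(1)] by (simp add: Y_def M_def)
    ultimately show ?thesis by (simp add: V_def power_mult_distrib mult_ac)
  qed
  have i4: "V powr p = U powr (-2*\<beta>) * P powr (q - p) * B powr p"
    using Zp Nn by (simp add: V_def powr_mult I(4)[OF k0])
  have c1n: "c1 \<ge> 0" "c2 \<ge> 0" using p k by (auto simp: c1_def c2_def)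
  have core: "- \<kappa> * Y powr p + c1 * Y powr (p - 1) * V + c2 * pw Y (p - 2) * V\<^sup>2 \<le> CW * V powr p"
    unfolding CW_def R_def by (rule core_ineq[OF p kp c1n Yn])
  have eqL: "(p - 1) * (W * M * (norm (U powr (-\<alpha>) *\<^sub>R (e *\<^sub>R b) + \<eta> *\<^sub>R ((-\<alpha> * U powr (-\<alpha> - 1)) *\<^sub>R a)))\<^sup>2)
     + t * (W * M * (a \<bullet> (U powr (-2*\<alpha>-1) *\<^sub>R (\<eta> *\<^sub>R (e *\<^sub>R b) + \<eta> *\<^sub>R (e *\<^sub>R b)) + (\<eta> * \<eta>) *\<^sub>R (((-2*\<alpha>-1) * U powr (-2*\<alpha>-1-1)) *\<^sub>R a))))
     = W * M * ((p - 1) * L1 * B\<^sup>2 + (2*t - 2*(p-1)*\<alpha>) * L2 * s - \<kappa> * L3 * N\<^sup>2)"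
    unfolding n2 ip u1 u2 u3 L1_def L2_def L3_def ka by (rule alg)
  have "(p - 1) * (W * M * (norm (U powr (-\<alpha>) *\<^sub>R (e *\<^sub>R b) + \<eta> *\<^sub>R ((-\<alpha> * U powr (-\<alpha> - 1)) *\<^sub>R a)))\<^sup>2)
     + t * (W * M * (a \<bullet> (U powr (-2*\<alpha>-1) *\<^sub>R (\<eta> *\<^sub>R (e *\<^sub>R b) + \<eta> *\<^sub>R (e *\<^sub>R b)) + (\<eta> * \<eta>) *\<^sub>R (((-2*\<alpha>-1) * U powr (-2*\<alpha>-1-1)) *\<^sub>R a))))
     = W * M * ((p - 1) * L1 * B\<^sup>2 + (2*t - 2*(p-1)*\<alpha>) * L2 * s - \<kappa> * L3 * N\<^sup>2)" by (rule eqL)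
  also have "W * M * ((p - 1) * L1 * B\<^sup>2 + (2*t - 2*(p-1)*\<alpha>) * L2 * s - \<kappa> * L3 * N\<^sup>2)
      \<le> W * M * ((p - 1) * L1 * B\<^sup>2 + \<bar>2*t - 2*(p-1)*\<alpha>\<bar> * L2 * (N * B) - \<kappa> * L3 * N\<^sup>2)"
    using sb W Mn by (intro mult_left_mono) auto
  also have "\<dots> = W * (- \<kappa> * (M * L3 * N\<^sup>2) + \<bar>2*t - 2*(p-1)*\<alpha>\<bar> * (M * L2 * (N * B)) + (p - 1) * (M * L1 * B\<^sup>2))"
    by (simp add: algebra_simps)
  also have "\<dots> = W * (- \<kappa> * Y powr p + c1 * Y powr (p - 1) * V + c2 * pw Y (p - 2) * V\<^sup>2)"
    unfolding i1 i2 i3 c1_def c2_def by (simp add: algebra_simps)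
  also have "\<dots> \<le> W * (CW * V powr p)" using core W by (rule mult_left_mono)
  also have "\<dots> = W * CW * (U powr (-2*\<beta>) * P powr (q - p) * norm b powr p)"
    unfolding i4 B_def by simp
  finally show ?thesis unfolding \<eta>_def e_def M_def N_def .
qed



lemma powr_sum_eq: "a + b = c \<Longrightarrow> (U::real) powr a * U powr b = U powr c" by (metis powr_add)

lemma mid_bound:
  fixes a v :: "'v::real_inner" and W p :: real
  assumes p: "p \<ge> 2" and W: "W \<ge> 0"
  shows "(p - 2) * (if a = 0 then 0 else W * norm a powr (p - 4) * (a \<bullet> v)\<^sup>2)
         \<le> (p - 2) * (W * pw (norm a) (p - 2) * (norm v)\<^sup>2)"
proof (cases "a = 0 \<or> p = 2")
  case True
  then show ?thesis using p W by (auto simp: pw_def)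
next
  case False
  then have a: "a \<noteq> 0" and p2: "p \<noteq> 2" by auto
  have cs: "\<bar>a \<bullet> v\<bar> \<le> norm a * norm v" by (rule Cauchy_Schwarz_ineq2)
  have "\<bar>a \<bullet> v\<bar>\<^sup>2 \<le> (norm a * norm v)\<^sup>2" by (rule power_mono[OF cs abs_ge_zero])
  then have "(a \<bullet> v)\<^sup>2 \<le> (norm a * norm v)\<^sup>2" by simp
  then have "W * norm a powr (p - 4) * (a \<bullet> v)\<^sup>2 \<le> W * norm a powr (p - 4) * (norm a * norm v)\<^sup>2"
    using W by (intro mult_left_mono) auto
  also have "\<dots> = W * (norm a powr (p - 4) * (norm a)\<^sup>2) * (norm v)\<^sup>2" by (simp add: power_mult_distrib)
  also have "(norm a)\<^sup>2 = norm a powr 2" using a by (simp add: powr_numeral)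
  also have "norm a powr (p - 4) * norm a powr 2 = norm a powr (p - 2)"
    by (rule powr_sum_eq) simp
  finally have "W * norm a powr (p - 4) * (a \<bullet> v)\<^sup>2 \<le> W * pw (norm a) (p - 2) * (norm v)\<^sup>2"
    using p2 by (simp add: pw_def)
  then show ?thesis using a p by (intro mult_left_mono) auto
qed

lemma Gpart:
  fixes G U P \<delta> \<gamma> t \<alpha> q k :: real
  assumes G: "G \<ge> 0" and U: "U > 0" "U \<le> 1" and P: "P \<ge> 0" and dg: "\<delta> < \<gamma>" and t: "t < \<delta>"
    and q: "q = 2*\<alpha> + 1 + \<delta>" and kq: "k = q / 2"
  shows "- (G * (\<delta> * U powr (-\<delta> - 1) + \<gamma> * U powr (-\<gamma> - 1)) * (U powr (-\<alpha>) * P powr k)\<^sup>2)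
     - t * (G * (- (U powr (-\<delta>)) - U powr (-\<gamma>)) * (U powr (-2*\<alpha>-1) * (P powr k * P powr k)))
     \<le> - (\<delta> - t) * (G * (P / U) powr q)"
proof -
  define Q where "Q = P powr q"
  have kk: "P powr k * P powr k = Q" unfolding Q_def kq by (simp add: powr_add[symmetric])
  have e1: "(U powr (-\<alpha>) * P powr k)\<^sup>2 = U powr (-2*\<alpha>) * Q"
    using U kk by (simp add: power2_eq_square powr_add[symmetric] mult_ac)
  have e2: "U powr (-\<delta> - 1) * U powr (-2*\<alpha>) = U powr (-q)" by (rule powr_sum_eq) (simp add: q)
  have e3: "U powr (-\<delta>) * U powr (-2*\<alpha>-1) = U powr (-q)" by (rule powr_sum_eq) (simp add: q)
  have e4: "U powr (-\<gamma>) * U powr (-2*\<alpha>-1) = U powr (-\<gamma>-1-2*\<alpha>)" by (rule powr_sum_eq) simp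
  have e5: "U powr (-\<gamma> - 1) * U powr (-2*\<alpha>) = U powr (-\<gamma>-1-2*\<alpha>)" by (rule powr_sum_eq) simp
  have e6: "(P / U) powr q = Q * U powr (-q)" using U P unfolding Q_def by (subst powr_divide) (auto simp: powr_minus divide_inverse)
  define x1 where "x1 = U powr (-\<delta> - 1)"
  define x2 where "x2 = U powr (-\<gamma> - 1)"
  define x3 where "x3 = U powr (-2*\<alpha>)"
  define x4 where "x4 = U powr (-\<delta>)"
  define x5 where "x5 = U powr (-\<gamma>)"
  define x6 where "x6 = U powr (-2*\<alpha>-1)"
  define y1 where "y1 = U powr (-q)"
  define y2 where "y2 = U powr (-\<gamma>-1-2*\<alpha>)"
  have "- (G * (\<delta> * U powr (-\<delta> - 1) + \<gamma> * U powr (-\<gamma> - 1)) * (U powr (-\<alpha>) * P powr k)\<^sup>2)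
     - t * (G * (- (U powr (-\<delta>)) - U powr (-\<gamma>)) * (U powr (-2*\<alpha>-1) * (P powr k * P powr k)))
     = - (G * (\<delta> * x1 + \<gamma> * x2) * (x3 * Q)) - t * (G * (- x4 - x5) * (x6 * Q))"
    unfolding e1 kk x1_def x2_def x3_def x4_def x5_def x6_def ..
  also have "\<dots> = - \<delta> * G * Q * (x1 * x3) - \<gamma> * G * Q * (x2 * x3) + t * G * Q * (x4 * x6) + t * G * Q * (x5 * x6)"
    by (simp add: algebra_simps)
  also have "\<dots> = - \<delta> * G * Q * y1 - \<gamma> * G * Q * y2 + t * G * Q * y1 + t * G * Q * y2"
    unfolding x1_def x2_def x3_def x4_def x5_def x6_def y1_def y2_def e2 e3 e4 e5 ..
  also have "\<dots> = - (\<delta> - t) * (G * Q * U powr (-q)) - (\<gamma> - t) * (G * Q * U powr (-\<gamma>-1-2*\<alpha>))"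
    unfolding y1_def[symmetric] y2_def[symmetric] by (simp add: algebra_simps)
  finally have "- (G * (\<delta> * U powr (-\<delta> - 1) + \<gamma> * U powr (-\<gamma> - 1)) * (U powr (-\<alpha>) * P powr k)\<^sup>2)
     - t * (G * (- (U powr (-\<delta>)) - U powr (-\<gamma>)) * (U powr (-2*\<alpha>-1) * (P powr k * P powr k)))
     = - (\<delta> - t) * (G * Q * U powr (-q)) - (\<gamma> - t) * (G * Q * U powr (-\<gamma>-1-2*\<alpha>))" .
  moreover have "(\<gamma> - t) * (G * Q * U powr (-\<gamma>-1-2*\<alpha>)) \<ge> 0" using dg t G by (simp add: Q_def)
  ultimately show ?thesis unfolding e6 by (simp only: mult.assoc)
qed

lemma Young2:
  fixes W G U P B CW m \<epsilon> \<beta> p \<delta> q :: real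
  assumes W: "W > 0" and G: "G > 0" "1 / G \<le> m" and U: "U > 0" "U \<le> 1" and P: "P \<ge> 0" "P \<le> 1"
    and B: "B \<ge> 0" and CW: "CW \<ge> 0" and e: "\<epsilon> > 0" and b: "\<beta> > 0" and d: "\<delta> \<ge> 1" and p: "p \<ge> 2"
    and q: "q = 2*\<beta> + p - 1 + \<delta>"
  defines "\<theta> \<equiv> q / (2*\<beta>)" and "\<theta>' \<equiv> q / (p - 1 + \<delta>)"
  defines "C2 \<equiv> (\<epsilon>*\<theta>) powr (-\<theta>'/\<theta>) * m powr (\<theta>'/\<theta>) * CW powr \<theta>' / \<theta>'"
  shows "W * CW * (U powr (-2*\<beta>) * P powr (q - p) * B powr p)
         \<le> \<epsilon> * (G * (P / U) powr q) + C2 * (W powr \<theta>' * B powr (p * \<theta>'))"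
proof -
  have qp: "q > 0" "p - 1 + \<delta> > 0" using q b p d by auto
  have th: "\<theta> > 1" "\<theta>' > 1" unfolding \<theta>_def \<theta>'_def using qp q b by (auto simp: field_simps)
  have C2n: "C2 \<ge> 0" unfolding C2_def using th by simp
  have Rn: "\<epsilon> * (G * (P / U) powr q) + C2 * (W powr \<theta>' * B powr (p * \<theta>')) \<ge> 0"
    using e G C2n by simp
  show ?thesis
  proof (cases "P = 0 \<or> B = 0 \<or> CW = 0")
    case True
    then show ?thesis using Rn by auto
  next
    case False
    then have Pp: "P > 0" and Bp: "B > 0" and CWp: "CW > 0" using P B CW by auto
    define x where "x = (\<epsilon>*\<theta>*G) powr (1/\<theta>) * U powr (-2*\<beta>) * P powr (q - p)"
    define y where "y = (\<epsilon>*\<theta>*G) powr (-1/\<theta>) * CW * W * B powr p"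
    have etG: "\<epsilon>*\<theta>*G > 0" using e th G by simp
    have xy: "x * y = W * CW * (U powr (-2*\<beta>) * P powr (q - p) * B powr p)"
    proof -
      have "(\<epsilon>*\<theta>*G) powr (1/\<theta>) * (\<epsilon>*\<theta>*G) powr (-1/\<theta>) = 1"
        using etG by (subst powr_sum_eq[where c=0]) auto
      then show ?thesis unfolding x_def y_def by (simp add: algebra_simps)
    qed
    have inv: "1/\<theta> + 1/\<theta>' = 1" unfolding \<theta>_def \<theta>'_def using qp b by (simp add: divide_simps q)
    have yn: "x \<ge> 0" "y \<ge> 0" unfolding x_def y_def using CWp W by auto
    have young: "x * y \<le> x powr \<theta> / \<theta> + y powr \<theta>' / \<theta>'"
      by (rule Youngs_inequality[OF th inv yn])
    have xp: "x > 0" unfolding x_def using etG e th G U Pp by (intro mult_pos_pos) auto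
    have xt: "x powr \<theta> = \<epsilon>*\<theta>*G * U powr (-q) * P powr ((q - p) * \<theta>)"
    proof (rule eq_by_ln)
      show "0 < x powr \<theta>" using xp by simp
      show "0 < \<epsilon>*\<theta>*G * U powr (-q) * P powr ((q - p) * \<theta>)" using etG e th G U Pp by (intro mult_pos_pos) auto
      have "ln (x powr \<theta>) = \<theta> * ((1/\<theta>) * ln (\<epsilon>*\<theta>*G) + (-2*\<beta>) * ln U + (q - p) * ln P)"
        using xp etG e G th U Pp by (simp add: x_def ln_mult ln_powr)
      also have "\<dots> = ln (\<epsilon>*\<theta>*G) + (-q) * ln U + ((q - p) * \<theta>) * ln P"
        using th b unfolding \<theta>_def by (simp add: field_simps)
      also have "\<dots> = ln (\<epsilon>*\<theta>*G * U powr (-q) * P powr ((q - p) * \<theta>))"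
        using etG e G th U Pp by (simp add: ln_mult ln_powr)
      finally show "ln (x powr \<theta>) = ln (\<epsilon>*\<theta>*G * U powr (-q) * P powr ((q - p) * \<theta>))" .
    qed
    have Pm: "P powr ((q - p) * \<theta>) \<le> P powr q"
    proof (rule powr_mono')
      have "q - p \<ge> 2*\<beta>" using q d by simp
      then have "(q - p) * q \<ge> 2*\<beta> * q" using qp by (intro mult_right_mono) auto
      then show "q \<le> (q - p) * \<theta>" unfolding \<theta>_def using b by (simp add: field_simps)
    qed (use P in auto)
    have x1: "x powr \<theta> / \<theta> \<le> \<epsilon> * (G * (P / U) powr q)"
    proof -
      have "x powr \<theta> / \<theta> = \<epsilon>*G * U powr (-q) * P powr ((q - p) * \<theta>)"
        unfolding xt using th by simp
      also have "\<dots> \<le> \<epsilon>*G * U powr (-q) * P powr q"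
        using Pm e G U by (intro mult_left_mono) auto
      also have "\<dots> = \<epsilon> * (G * (P / U) powr q)"
      proof -
        have "(P / U) powr q = P powr q * U powr (-q)" using U P
          by (subst powr_divide) (auto simp: powr_minus divide_inverse)
        then show ?thesis by (simp add: mult_ac)
      qed
      finally show ?thesis .
    qed
    have yp: "y > 0" unfolding y_def using etG CWp W Bp by (intro mult_pos_pos) auto
    have yt: "y powr \<theta>' = (\<epsilon>*\<theta>) powr (-\<theta>'/\<theta>) * (1/G) powr (\<theta>'/\<theta>) * CW powr \<theta>' * (W powr \<theta>' * B powr (p * \<theta>'))"
    proof (rule eq_by_ln)
      have et: "\<epsilon>*\<theta> > 0" using e th by simp
      show "0 < y powr \<theta>'" using yp by simp
      show "0 < (\<epsilon>*\<theta>) powr (-\<theta>'/\<theta>) * (1/G) powr (\<theta>'/\<theta>) * CW powr \<theta>' * (W powr \<theta>' * B powr (p * \<theta>'))"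
        using et G CWp W Bp by (intro mult_pos_pos) auto
      have "ln (y powr \<theta>') = \<theta>' * ((-1/\<theta>) * (ln (\<epsilon>*\<theta>) + ln G) + ln CW + ln W + p * ln B)"
        using yp et e th G CWp W Bp by (simp add: y_def ln_mult ln_powr)
      also have "\<dots> = (-\<theta>'/\<theta>) * ln (\<epsilon>*\<theta>) + (\<theta>'/\<theta>) * (- ln G) + \<theta>' * ln CW + (\<theta>' * ln W + (p * \<theta>') * ln B)"
        using th by (simp add: field_simps)
      also have "\<dots> = ln ((\<epsilon>*\<theta>) powr (-\<theta>'/\<theta>) * (1/G) powr (\<theta>'/\<theta>) * CW powr \<theta>' * (W powr \<theta>' * B powr (p * \<theta>')))"
        using et e th G CWp W Bp by (simp add: ln_mult ln_powr ln_div)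
      finally show "ln (y powr \<theta>') = ln ((\<epsilon>*\<theta>) powr (-\<theta>'/\<theta>) * (1/G) powr (\<theta>'/\<theta>) * CW powr \<theta>' * (W powr \<theta>' * B powr (p * \<theta>')))" .
    qed
    have Gm: "(1/G) powr (\<theta>'/\<theta>) \<le> m powr (\<theta>'/\<theta>)"
      using G th by (intro powr_mono2) auto
    have y1: "y powr \<theta>' / \<theta>' \<le> C2 * (W powr \<theta>' * B powr (p * \<theta>'))"
    proof -
      have "y powr \<theta>' \<le> (\<epsilon>*\<theta>) powr (-\<theta>'/\<theta>) * m powr (\<theta>'/\<theta>) * CW powr \<theta>' * (W powr \<theta>' * B powr (p * \<theta>'))"
        unfolding yt using Gm by (intro mult_right_mono mult_left_mono) auto
      then show ?thesis unfolding C2_def using th by (simp add: field_simps)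
    qed
    show ?thesis using young x1 y1 xy by linarith
  qed
qed



lemma delta_ge1: "class_Pa \<delta> p \<Longrightarrow> \<delta> \<ge> 1"
proof -
  assume "class_Pa \<delta> p"
  moreover have "(p - 1)\<^sup>2 / 4 \<ge> 1" if "p > 3" for p :: real
  proof -
    have "(p - 1)\<^sup>2 \<ge> 2\<^sup>2" using that by (intro power_mono) auto
    then show ?thesis by simp
  qed
  ultimately show ?thesis unfolding class_Pa_def by fastforce
qed

lemma key_ineq:
  fixes p \<delta> \<beta> :: real
  assumes p: "2 \<le> p" and d: "0 < \<delta>" and cl: "class_Pa \<delta> p" and b: "0 < \<beta>" "\<beta> < s_p p \<delta>"
  shows "(p - 1) * (\<beta> + (p - 2) / 2)\<^sup>2 < \<delta> * (2 * \<beta> + p - 1)"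
proof (cases "p = 2")
  case True
  define s where "s = sqrt (\<delta>\<^sup>2 + \<delta>)"
  have s0: "s \<ge> 0" and s2: "s\<^sup>2 = \<delta>\<^sup>2 + \<delta>" using d by (auto simp: s_def)
  have "\<delta> \<le> s" unfolding s_def using d by (intro real_le_rsqrt) auto
  have "\<beta> < \<delta> + s" using b True by (simp add: s_p_def s_def)
  then have "\<bar>\<beta> - \<delta>\<bar> < s" using b \<open>\<delta> \<le> s\<close> by auto
  then have "\<bar>\<beta> - \<delta>\<bar>\<^sup>2 < s\<^sup>2" by (intro power_strict_mono) auto
  then have "(\<beta> - \<delta>)\<^sup>2 < \<delta>\<^sup>2 + \<delta>" using s2 by simp
  then show ?thesis using True by (simp add: power2_eq_square algebra_simps)
next
  case False
  then have p2: "p > 2" using p by simp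
  define S where "S = 2 * \<delta> / (p - 1) - (p - 1) / 2"
  have bS: "\<beta> < S" using b False by (simp add: s_p_def S_def)
  define f where "f = (\<lambda>x. \<delta> * (2 * x + p - 1) - (p - 1) * (x + (p - 2) / 2)\<^sup>2)"
  have d1: "\<delta> \<ge> 1" using delta_ge1[OF cl] .
  have f0: "f 0 > 0"
  proof -
    have "\<delta> > (p - 2)\<^sup>2 / 4"
    proof (cases "p \<le> 3")
      case True
      have "(p - 2)\<^sup>2 \<le> 1\<^sup>2" using True p2 by (intro power_mono) auto
      then show ?thesis using d1 by simp
    next
      case False
      then have "\<delta> > (p - 1)\<^sup>2 / 4" using cl unfolding class_Pa_def by auto
      moreover have "(p - 2)\<^sup>2 \<le> (p - 1)\<^sup>2" using p2 by (intro power_mono) auto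
      ultimately show ?thesis by simp
    qed
    then have "(p - 1) * (\<delta> - (p - 2)\<^sup>2 / 4) > 0" using p2 by simp
    moreover have "f 0 = (p - 1) * (\<delta> - (p - 2)\<^sup>2 / 4)" unfolding f_def by (simp add: power2_eq_square field_simps)
    ultimately show ?thesis by simp
  qed
  have fS: "f S > 0"
  proof -
    have "f S = 2 * \<delta> - (p - 1) / 4"
    proof -
      define r where "r = p - 1"
      have r: "r > 0" "p = r + 1" using p2 by (auto simp: r_def)
      have fS1: "f S = \<delta> * (2 * S + r) - r * (S + (r - 1) / 2)\<^sup>2"
        unfolding f_def r_def by (simp add: algebra_simps)
      have S1: "S + (r - 1) / 2 = 2 * \<delta> / r - 1 / 2" "2 * S + r = 4 * \<delta> / r"
        unfolding S_def r_def[symmetric] by (simp_all add: field_simps)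
      have "f S = \<delta> * (4 * \<delta> / r) - r * (2 * \<delta> / r - 1 / 2)\<^sup>2"
        unfolding fS1 S1 ..
      also have "\<dots> = 2 * \<delta> - r / 4" using r(1) by (simp add: power2_eq_square field_simps)
      finally show ?thesis by (simp add: r_def)
    qed
    moreover have "2 * \<delta> > (p - 1) / 4"
    proof (cases "p \<le> 3")
      case True then show ?thesis using d1 by simp
    next
      case False
      then have "\<delta> > (p - 1)\<^sup>2 / 4" using cl unfolding class_Pa_def by auto
      moreover have "(p - 1)\<^sup>2 \<ge> (p - 1) * 1" using False by (simp add: power2_eq_square)
      ultimately show ?thesis using d by linarith
    qed
    ultimately show ?thesis by simp
  qed
  have id: "S * f \<beta> = (S - \<beta>) * f 0 + \<beta> * f S + (p - 1) * \<beta> * (S - \<beta>) * S"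
    unfolding f_def by (simp add: power2_eq_square field_simps)
  have "(S - \<beta>) * f 0 > 0" using bS f0 by simp
  moreover have "\<beta> * f S > 0" using b fS by simp
  moreover have "(p - 1) * \<beta> * (S - \<beta>) * S > 0" using p2 b bS by simp
  ultimately have "S * f \<beta> > 0" unfolding id by linarith
  moreover have "S > 0" using b bS by simp
  ultimately have "f \<beta> > 0" by (simp add: zero_less_mult_iff)
  then show ?thesis unfolding f_def by simp
qed

lemma pointwise:
  fixes a b :: "'v::real_inner" and W G U P m \<gamma> t p \<alpha> \<beta> q k \<delta> \<kappa> CW \<epsilon> C2 :: real
  assumes W: "W > 0" and G: "G > 0" "1 / G \<le> m" and U: "U > 0" "U \<le> 1" and P: "P \<ge> 0" "P \<le> 1"
    and p: "p \<ge> 2" and b: "\<beta> > 0" and d: "\<delta> \<ge> 1" and dg: "\<delta> < \<gamma>" and t: "t < \<delta>"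
    and al: "\<alpha> = \<beta> + (p - 2) / 2"
    and q: "q = 2 * \<beta> + p - 1 + \<delta>" and kq: "k = q / 2" and k: "k > 1"
    and ka: "\<kappa> = t * (2*\<alpha>+1) - (p-1) * \<alpha>\<^sup>2" and kp: "\<kappa> > 0"
    and CW: "CW = \<bar>2*t - 2*(p-1)*\<alpha>\<bar> * k * (max 1 ((\<bar>2*t - 2*(p-1)*\<alpha>\<bar> * k + (p - 1) * k\<^sup>2) / \<kappa>)) powr (p - 1)
       + (p - 1) * k\<^sup>2 * (max 1 ((\<bar>2*t - 2*(p-1)*\<alpha>\<bar> * k + (p - 1) * k\<^sup>2) / \<kappa>)) powr (p - 2)"
    and e: "\<epsilon> = (\<delta> - t) / 2"
    and C2: "C2 = (\<epsilon> * (q / (2*\<beta>))) powr (-(q / (p - 1 + \<delta>))/(q / (2*\<beta>))) * m powr ((q / (p - 1 + \<delta>))/(q / (2*\<beta>)))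
       * CW powr (q / (p - 1 + \<delta>)) / (q / (p - 1 + \<delta>))"
  defines "\<phi> \<equiv> U powr (-\<alpha>) * P powr k"
    and "D\<phi> \<equiv> U powr (-\<alpha>) *\<^sub>R ((k * P powr (k - 1)) *\<^sub>R b) + P powr k *\<^sub>R ((-\<alpha> * U powr (-\<alpha> - 1)) *\<^sub>R a)"
    and "\<zeta> \<equiv> U powr (-2*\<alpha>-1) * (P powr k * P powr k)"
    and "D\<zeta> \<equiv> U powr (-2*\<alpha>-1) *\<^sub>R (P powr k *\<^sub>R ((k * P powr (k - 1)) *\<^sub>R b) + P powr k *\<^sub>R ((k * P powr (k - 1)) *\<^sub>R b)) + (P powr k * P powr k) *\<^sub>R (((-2*\<alpha>-1) * U powr (-2*\<alpha>-1-1)) *\<^sub>R a)"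
  shows "W * pw (norm a) (p - 2) * (norm D\<phi>)\<^sup>2
     + (p - 2) * (if a = 0 then 0 else W * norm a powr (p - 4) * (a \<bullet> D\<phi>)\<^sup>2)
     - G * (\<delta> * U powr (-\<delta> - 1) + \<gamma> * U powr (-\<gamma> - 1)) * \<phi>\<^sup>2
     + t * (W * pw (norm a) (p - 2) * (a \<bullet> D\<zeta>))
     - t * (G * (- (U powr (-\<delta>)) - U powr (-\<gamma>)) * \<zeta>)
     \<le> - \<epsilon> * (G * (P / U) powr q) + C2 * (W powr (q / (p - 1 + \<delta>)) * norm b powr (p * (q / (p - 1 + \<delta>))))"
proof -
  have mid: "(p - 2) * (if a = 0 then 0 else W * norm a powr (p - 4) * (a \<bullet> D\<phi>)\<^sup>2)
         \<le> (p - 2) * (W * pw (norm a) (p - 2) * (norm D\<phi>)\<^sup>2)"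
    by (rule mid_bound[OF p]) (use W in simp)
  have Wp: "(p - 1) * (W * pw (norm a) (p - 2) * (norm D\<phi>)\<^sup>2) + t * (W * pw (norm a) (p - 2) * (a \<bullet> D\<zeta>))
     \<le> W * CW * (U powr (-2*\<beta>) * P powr (q - p) * norm b powr p)"
    unfolding D\<phi>_def D\<zeta>_def CW
    by (rule Wpart[OF U(1) P(1) _ p al q kq k ka kp]) (use W in simp)
  have Gp: "- (G * (\<delta> * U powr (-\<delta> - 1) + \<gamma> * U powr (-\<gamma> - 1)) * \<phi>\<^sup>2)
     - t * (G * (- (U powr (-\<delta>)) - U powr (-\<gamma>)) * \<zeta>)
     \<le> - (\<delta> - t) * (G * (P / U) powr q)"
    unfolding \<phi>_def \<zeta>_def
    by (rule Gpart[OF _ U P(1) dg t _ kq]) (use G q al in \<open>auto simp: field_simps\<close>)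
  have CWn: "CW \<ge> 0" unfolding CW using p k by simp
  have en: "\<epsilon> > 0" using e t by simp
  have Y: "W * CW * (U powr (-2*\<beta>) * P powr (q - p) * norm b powr p)
         \<le> \<epsilon> * (G * (P / U) powr q) + C2 * (W powr (q / (p - 1 + \<delta>)) * norm b powr (p * (q / (p - 1 + \<delta>))))"
    unfolding C2 by (rule Young2[OF W G U P _ CWn en b d p q]) simp
  have split: "(p - 1) * (W * pw (norm a) (p - 2) * (norm D\<phi>)\<^sup>2)
     = W * pw (norm a) (p - 2) * (norm D\<phi>)\<^sup>2 + (p - 2) * (W * pw (norm a) (p - 2) * (norm D\<phi>)\<^sup>2)"
    by (simp add: algebra_simps)
  have "(\<delta> - t) = 2 * \<epsilon>" using e by simp
  then have "- (\<delta> - t) * (G * (P / U) powr q) = - 2 * \<epsilon> * (G * (P / U) powr q)" by simp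
  then show ?thesis using mid Wp Gp Y split by linarith
qed



lemma cont_pw:
  assumes "continuous_on UNIV f" "\<And>x. f x \<ge> 0" "p \<ge> 2"
  shows "continuous_on UNIV (\<lambda>x. pw (f x) (p - 2))"
proof (cases "p = 2")
  case True then show ?thesis by (simp add: pw_def)
next
  case False
  then have "(\<lambda>x. pw (f x) (p - 2)) = (\<lambda>x. f x powr (p - 2))" by (simp add: pw_def)
  moreover have "continuous_on UNIV (\<lambda>x. f x powr (p - 2))"
    using assms False by (intro continuous_on_powr') (auto intro: continuous_intros)
  ultimately show ?thesis by metis
qed

lemma mid_bound0:
  fixes a v :: "'v::real_inner"
  assumes p: "p \<ge> 2" and a: "a \<noteq> 0"
  shows "norm a powr (p - 4) * (a \<bullet> v)\<^sup>2 \<le> pw (norm a) (p - 2) * (norm v)\<^sup>2"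
proof -
  have cs: "\<bar>a \<bullet> v\<bar> \<le> norm a * norm v" by (rule Cauchy_Schwarz_ineq2)
  have "\<bar>a \<bullet> v\<bar>\<^sup>2 \<le> (norm a * norm v)\<^sup>2" by (rule power_mono[OF cs abs_ge_zero])
  then have "(a \<bullet> v)\<^sup>2 \<le> (norm a * norm v)\<^sup>2" by simp
  then have "norm a powr (p - 4) * (a \<bullet> v)\<^sup>2 \<le> norm a powr (p - 4) * (norm a * norm v)\<^sup>2"
    by (intro mult_left_mono) auto
  also have "\<dots> = (norm a powr (p - 4) * (norm a)\<^sup>2) * (norm v)\<^sup>2" by (simp add: power_mult_distrib)
  also have "(norm a)\<^sup>2 = norm a powr 2" using a by (simp add: powr_numeral)
  also have "norm a powr (p - 4) * norm a powr 2 = norm a powr (p - 2)"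
    by (rule powr_sum_eq) simp
  also have "norm a powr (p - 2) = pw (norm a) (p - 2)" using a by (simp add: pw_pos)
  finally show ?thesis .
qed

lemma I2_int:
  fixes w :: "real^'n \<Rightarrow> real" and Du V :: "real^'n \<Rightarrow> real^'n"
  assumes w: "locally_integrable w" and Du: "continuous_on UNIV Du" and V: "continuous_on UNIV V"
    and K: "compact K" "\<And>x. x \<notin> K \<Longrightarrow> V x = 0" and p: "p \<ge> 2"
  shows "integrable lborel (\<lambda>x. if Du x = 0 then 0 else w x * norm (Du x) powr (p - 4) * (Du x \<bullet> V x)\<^sup>2)"
proof (rule li_integrable[OF w _ K(1)])
  show "continuous_on UNIV (\<lambda>x. pw (norm (Du x)) (p - 2) * (norm (V x))\<^sup>2)"
    using Du V p by (intro continuous_intros cont_pw) auto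
  have wm: "w \<in> borel_measurable lborel" by (rule li_measurable[OF w])
  have Dum: "Du \<in> borel_measurable lborel" using borel_measurable_continuous_onI[OF Du] by simp
  have Vm: "V \<in> borel_measurable lborel" using borel_measurable_continuous_onI[OF V] by simp
  have "closed {x. Du x = (\<lambda>_. 0) x}" by (rule closed_Collect_eq[OF Du]) (rule continuous_on_const)
  then have "{x \<in> space lborel. Du x = 0} \<in> sets lborel" by simp
  moreover have "(\<lambda>x. w x * norm (Du x) powr (p - 4) * (Du x \<bullet> V x)\<^sup>2) \<in> borel_measurable lborel"
    using wm Dum Vm by measurable
  ultimately show "(\<lambda>x. if Du x = 0 then 0 else w x * norm (Du x) powr (p - 4) * (Du x \<bullet> V x)\<^sup>2) \<in> borel_measurable lborel"
    by (intro measurable_If) auto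
  fix x
  show "\<bar>if Du x = 0 then 0 else w x * norm (Du x) powr (p - 4) * (Du x \<bullet> V x)\<^sup>2\<bar>
        \<le> \<bar>w x\<bar> * \<bar>pw (norm (Du x)) (p - 2) * (norm (V x))\<^sup>2\<bar>"
  proof (cases "Du x = 0")
    case False
    have "\<bar>w x * norm (Du x) powr (p - 4) * (Du x \<bullet> V x)\<^sup>2\<bar> = \<bar>w x\<bar> * (norm (Du x) powr (p - 4) * (Du x \<bullet> V x)\<^sup>2)"
      by (simp add: abs_mult)
    also have "\<dots> \<le> \<bar>w x\<bar> * (pw (norm (Du x)) (p - 2) * (norm (V x))\<^sup>2)"
      using mid_bound0[OF p False] by (intro mult_left_mono) auto
    also have "\<dots> = \<bar>w x\<bar> * \<bar>pw (norm (Du x)) (p - 2) * (norm (V x))\<^sup>2\<bar>"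
      by (simp add: pw_def)
    finally show ?thesis using False by simp
  qed simp
  fix x assume "x \<notin> K"
  then show "(if Du x = 0 then 0 else w x * norm (Du x) powr (p - 4) * (Du x \<bullet> V x)\<^sup>2) = 0"
    using K(2) by simp
qed

theorem theorem3p1:
  fixes \<beta> p \<delta> m :: real
  assumes "2 \<le> p" and "0 < \<delta>" and "class_Pa \<delta> p"
    and "0 < \<beta>" and "\<beta> < s_p p \<delta>"
  shows "\<exists>c>0. \<forall>\<gamma> (w :: real^'n \<Rightarrow> real) g u Du \<psi> D\<psi>.
    \<delta> < \<gamma> \<and>
    locally_integrable w \<and> locally_integrable g \<and>
    (AE x in lborel. w x > 0) \<and> (AE x in lborel. g x > 0) \<and>
    esssup lborel (\<lambda>x. ereal (1 / g x)) = ereal m \<and>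
    C1_with_grad u Du \<and> (\<forall>x. 0 < u x \<and> u x \<le> 1) \<and>
    weak_solution p \<delta> \<gamma> w g u Du \<and> stable_sol p \<delta> \<gamma> w g u Du \<and>
    C1_with_grad \<psi> D\<psi> \<and> compact_support \<psi> \<and> (\<forall>x. 0 \<le> \<psi> x \<and> \<psi> x \<le> 1)
    \<longrightarrow>
    (\<integral>\<^sup>+x. ennreal (g x * (\<psi> x / u x) powr (2 * \<beta> + p - 1 + \<delta>)) \<partial>lborel)
      \<le> ennreal c * (\<integral>\<^sup>+x. ennreal (w x powr theta_a' \<beta> p \<delta>
                         * norm (D\<psi> x) powr (p * theta_a' \<beta> p \<delta>)) \<partial>lborel)"
proof -
  note p = assms(1) and b = assms(4)
  have d1: "\<delta> \<ge> 1" using delta_ge1[OF assms(3)] .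
  define \<alpha> where "\<alpha> = \<beta> + (p - 2) / 2"
  define q where "q = 2 * \<beta> + p - 1 + \<delta>"
  define k where "k = q / 2"
  define c0 where "c0 = (p - 1) * \<alpha>\<^sup>2 / (2 * \<alpha> + 1)"
  define t where "t = (c0 + \<delta>) / 2"
  define \<kappa> where "\<kappa> = t * (2*\<alpha>+1) - (p-1) * \<alpha>\<^sup>2"
  define CW where "CW = \<bar>2*t - 2*(p-1)*\<alpha>\<bar> * k * (max 1 ((\<bar>2*t - 2*(p-1)*\<alpha>\<bar> * k + (p - 1) * k\<^sup>2) / \<kappa>)) powr (p - 1)
       + (p - 1) * k\<^sup>2 * (max 1 ((\<bar>2*t - 2*(p-1)*\<alpha>\<bar> * k + (p - 1) * k\<^sup>2) / \<kappa>)) powr (p - 2)"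
  define \<epsilon> where "\<epsilon> = (\<delta> - t) / 2"
  define C2 where "C2 = (\<epsilon> * (q / (2*\<beta>))) powr (-(q / (p - 1 + \<delta>))/(q / (2*\<beta>))) * m powr ((q / (p - 1 + \<delta>))/(q / (2*\<beta>)))
       * CW powr (q / (p - 1 + \<delta>)) / (q / (p - 1 + \<delta>))"
  define c where "c = C2 / \<epsilon> + 1"
  have ap: "\<alpha> > 0" "2 * \<alpha> + 1 > 0" using b p by (auto simp: \<alpha>_def field_simps)
  have e21: "2 * \<alpha> + 1 = 2 * \<beta> + p - 1" by (simp add: \<alpha>_def field_simps)
  have key: "(p - 1) * \<alpha>\<^sup>2 < \<delta> * (2 * \<alpha> + 1)"
    unfolding e21 using key_ineq[OF p assms(2,3) b assms(5)] unfolding \<alpha>_def[symmetric] .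
  have c0d: "c0 < \<delta>" using key ap unfolding c0_def by (simp add: field_simps)
  have tl: "t < \<delta>" "c0 < t" using c0d by (auto simp: t_def)
  have kp: "\<kappa> > 0"
  proof -
    have "\<kappa> = (2 * \<alpha> + 1) * (t - c0)" unfolding \<kappa>_def c0_def using ap by (simp add: field_simps)
    then show ?thesis using ap tl by simp
  qed
  have k1: "k > 1" unfolding k_def q_def using b p d1 by simp
  have ep: "\<epsilon> > 0" using tl by (simp add: \<epsilon>_def)
  have CWn: "CW \<ge> 0" unfolding CW_def using p k1 by simp
  have C2n: "C2 \<ge> 0" unfolding C2_def using p d1 b by (simp add: q_def)
  have cp: "c > 0" unfolding c_def using divide_nonneg_pos[OF C2n ep] by linarith
  have th: "theta_a' \<beta> p \<delta> = q / (p - 1 + \<delta>)" by (simp add: theta_a'_def q_def)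
  show ?thesis
  proof (intro exI[of _ c] conjI allI impI)
    show "c > 0" by (rule cp)
    fix \<gamma> :: real and w g u :: "real^'n \<Rightarrow> real" and Du :: "real^'n \<Rightarrow> real^'n"
      and \<psi> :: "real^'n \<Rightarrow> real" and D\<psi> :: "real^'n \<Rightarrow> real^'n"
    assume H: "\<delta> < \<gamma> \<and>
    locally_integrable w \<and> locally_integrable g \<and>
    (AE x in lborel. w x > 0) \<and> (AE x in lborel. g x > 0) \<and>
    esssup lborel (\<lambda>x. ereal (1 / g x)) = ereal m \<and>
    C1_with_grad u Du \<and> (\<forall>x. 0 < u x \<and> u x \<le> 1) \<and>
    weak_solution p \<delta> \<gamma> w g u Du \<and> stable_sol p \<delta> \<gamma> w g u Du \<and>
    C1_with_grad \<psi> D\<psi> \<and> compact_support \<psi> \<and> (\<forall>x. 0 \<le> \<psi> x \<and> \<psi> x \<le> 1)"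
    have dg: "\<delta> < \<gamma>" and wli: "locally_integrable w" and gli: "locally_integrable g"
      and wpos: "AE x in lborel. w x > 0" and gpos: "AE x in lborel. g x > 0"
      and ess: "esssup lborel (\<lambda>x. ereal (1 / g x)) = ereal m"
      and uC1: "C1_with_grad u Du" and ub: "\<And>x. 0 < u x" "\<And>x. u x \<le> 1"
      and weak: "weak_solution p \<delta> \<gamma> w g u Du" and stab: "stable_sol p \<delta> \<gamma> w g u Du"
      and psiC1: "C1_with_grad \<psi> D\<psi>" and psis: "compact_support \<psi>" and psib: "\<And>x. 0 \<le> \<psi> x" "\<And>x. \<psi> x \<le> 1"
      using H by blast+
    have gm: "AE x in lborel. 1 / g x \<le> m"
      using esssup_AE[of "\<lambda>x. ereal (1 / g x)" lborel] ess by simp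
    define K where "K = closure {x. \<psi> x \<noteq> 0}"
    have K: "compact K" using psis unfolding compact_support_def K_def .
    have psi0: "\<And>x. x \<notin> K \<Longrightarrow> \<psi> x = 0" unfolding K_def using closure_subset[of "{x. \<psi> x \<noteq> 0}"] by blast
    have ucont: "continuous_on UNIV u" "continuous_on UNIV Du"
      using C1_cont[OF uC1] uC1 unfolding C1_with_grad_def by blast+
    have psicont: "continuous_on UNIV \<psi>" "continuous_on UNIV D\<psi>"
      using C1_cont[OF psiC1] psiC1 unfolding C1_with_grad_def by blast+
    have C1eta: "C1_with_grad (\<lambda>x. \<psi> x powr k) (\<lambda>x. (k * \<psi> x powr (k - 1)) *\<^sub>R D\<psi> x)"
      by (rule C1_powr_nonneg[OF psiC1 psib(1) k1])
    define \<phi> where "\<phi> = (\<lambda>x. u x powr (-\<alpha>) * \<psi> x powr k)"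
    define D\<phi> where "D\<phi> = (\<lambda>x. u x powr (-\<alpha>) *\<^sub>R ((k * \<psi> x powr (k - 1)) *\<^sub>R D\<psi> x) + \<psi> x powr k *\<^sub>R ((-\<alpha> * u x powr (-\<alpha> - 1)) *\<^sub>R Du x))"
    define \<zeta> where "\<zeta> = (\<lambda>x. u x powr (-2*\<alpha>-1) * (\<psi> x powr k * \<psi> x powr k))"
    define D\<zeta> where "D\<zeta> = (\<lambda>x. u x powr (-2*\<alpha>-1) *\<^sub>R (\<psi> x powr k *\<^sub>R ((k * \<psi> x powr (k - 1)) *\<^sub>R D\<psi> x) + \<psi> x powr k *\<^sub>R ((k * \<psi> x powr (k - 1)) *\<^sub>R D\<psi> x)) + (\<psi> x powr k * \<psi> x powr k) *\<^sub>R (((-2*\<alpha>-1) * u x powr (-2*\<alpha>-1-1)) *\<^sub>R Du x))"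
    have C1phi: "C1_with_grad \<phi> D\<phi>"
      unfolding \<phi>_def D\<phi>_def by (rule C1_mult[OF C1_powr_pos[OF uC1 ub(1)] C1eta])
    have C1zeta: "C1_with_grad \<zeta> D\<zeta>"
      unfolding \<zeta>_def D\<zeta>_def by (rule C1_mult[OF C1_powr_pos[OF uC1 ub(1)] C1_mult[OF C1eta C1eta]])
    have kk: "k > 0" "k - 1 > 0" using k1 by auto
    have phi0: "\<phi> x = 0" "D\<phi> x = 0" "\<zeta> x = 0" "D\<zeta> x = 0" if "x \<notin> K" for x
      using psi0[OF that] kk by (auto simp: \<phi>_def D\<phi>_def \<zeta>_def D\<zeta>_def)
    have cs: "compact_support f" if "\<And>x. x \<notin> K \<Longrightarrow> f x = 0" for f :: "real^'n \<Rightarrow> real"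
    proof -
      have "{x. f x \<noteq> 0} \<subseteq> K" using that by blast
      then have "closure {x. f x \<noteq> 0} \<subseteq> K" using K compact_imp_closed closure_minimal by blast
      then have "closure {x. f x \<noteq> 0} = K \<inter> closure {x. f x \<noteq> 0}" by blast
      then show ?thesis unfolding compact_support_def using K by (metis closed_closure compact_Int_closed)
    qed
    have phics: "compact_support \<phi>" "compact_support \<zeta>" using cs phi0 by auto
    have S: "(\<integral>x. w x * pw (norm (Du x)) (p - 2) * (norm (D\<phi> x))^2 \<partial>lborel)
        + (p - 2) * (\<integral>x. (if Du x = 0 then 0
                           else w x * norm (Du x) powr (p - 4) * (Du x \<bullet> D\<phi> x)^2) \<partial>lborel)
        - (\<integral>x. g x * (\<delta> * u x powr (-\<delta> - 1) + \<gamma> * u x powr (-\<gamma> - 1)) * (\<phi> x)^2 \<partial>lborel)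
        \<ge> 0"
      using stab C1phi phics(1) unfolding stable_sol_def by blast
    have Wk: "(\<integral>x. w x * pw (norm (Du x)) (p - 2) * (Du x \<bullet> D\<zeta> x) \<partial>lborel)
        = (\<integral>x. g x * (- (u x powr (-\<delta>)) - u x powr (-\<gamma>)) * \<zeta> x \<partial>lborel)"
      using weak C1zeta phics(2) unfolding weak_solution_def by blast
    have wm: "w \<in> borel_measurable lborel" by (rule li_measurable[OF wli])
    have gmeas: "g \<in> borel_measurable lborel" by (rule li_measurable[OF gli])
    have Dc: "continuous_on UNIV \<phi>" "continuous_on UNIV D\<phi>" "continuous_on UNIV \<zeta>" "continuous_on UNIV D\<zeta>"
      using C1_cont[OF C1phi] C1_cont[OF C1zeta] C1phi C1zeta unfolding C1_with_grad_def by blast+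
    have cpw: "continuous_on UNIV (\<lambda>x. pw (norm (Du x)) (p - 2))"
      by (rule cont_pw) (use ucont p in \<open>auto intro: continuous_intros\<close>)
    have un0: "\<And>x. u x \<noteq> 0" using ub(1) by (metis less_irrefl)
    have iI1: "integrable lborel (\<lambda>x. w x * pw (norm (Du x)) (p - 2) * (norm (D\<phi> x))^2)"
    proof -
      have "integrable lborel (\<lambda>x. w x * (pw (norm (Du x)) (p - 2) * (norm (D\<phi> x))^2))"
        by (rule li_integrable_mult[OF wli _ K]) (use cpw Dc phi0 in \<open>auto intro!: continuous_intros\<close>)
      then show ?thesis by (simp add: mult.assoc)
    qed
    have iI2: "integrable lborel (\<lambda>x. if Du x = 0 then 0 else w x * norm (Du x) powr (p - 4) * (Du x \<bullet> D\<phi> x)^2)"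
      by (rule I2_int[OF wli ucont(2) Dc(2) K phi0(2) p])
    have iI3: "integrable lborel (\<lambda>x. g x * (\<delta> * u x powr (-\<delta> - 1) + \<gamma> * u x powr (-\<gamma> - 1)) * (\<phi> x)^2)"
    proof -
      have "integrable lborel (\<lambda>x. g x * ((\<delta> * u x powr (-\<delta> - 1) + \<gamma> * u x powr (-\<gamma> - 1)) * (\<phi> x)^2))"
        by (rule li_integrable_mult[OF gli _ K]) (use ucont Dc phi0 un0 in \<open>auto intro!: continuous_intros\<close>)
      then show ?thesis by (simp add: mult.assoc)
    qed
    have iI4: "integrable lborel (\<lambda>x. w x * pw (norm (Du x)) (p - 2) * (Du x \<bullet> D\<zeta> x))"
    proof -
      have "integrable lborel (\<lambda>x. w x * (pw (norm (Du x)) (p - 2) * (Du x \<bullet> D\<zeta> x)))"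
        by (rule li_integrable_mult[OF wli _ K]) (use cpw ucont Dc phi0 in \<open>auto intro!: continuous_intros\<close>)
      then show ?thesis by (simp add: mult.assoc)
    qed
    have iI5: "integrable lborel (\<lambda>x. g x * (- (u x powr (-\<delta>)) - u x powr (-\<gamma>)) * \<zeta> x)"
    proof -
      have "integrable lborel (\<lambda>x. g x * ((- (u x powr (-\<delta>)) - u x powr (-\<gamma>)) * \<zeta> x))"
        by (rule li_integrable_mult[OF gli _ K]) (use ucont Dc phi0 un0 in \<open>auto intro!: continuous_intros\<close>)
      then show ?thesis by (simp add: mult.assoc)
    qed
    define f1 where "f1 = (\<lambda>x. w x * pw (norm (Du x)) (p - 2) * (norm (D\<phi> x))^2)"
    define f2 where "f2 = (\<lambda>x. if Du x = 0 then 0 else w x * norm (Du x) powr (p - 4) * (Du x \<bullet> D\<phi> x)^2)"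
    define f3 where "f3 = (\<lambda>x. g x * (\<delta> * u x powr (-\<delta> - 1) + \<gamma> * u x powr (-\<gamma> - 1)) * (\<phi> x)^2)"
    define f4 where "f4 = (\<lambda>x. w x * pw (norm (Du x)) (p - 2) * (Du x \<bullet> D\<zeta> x))"
    define f5 where "f5 = (\<lambda>x. g x * (- (u x powr (-\<delta>)) - u x powr (-\<gamma>)) * \<zeta> x)"
    define E where "E = (\<lambda>x. f1 x + (p - 2) * f2 x - f3 x + t * f4 x - t * f5 x)"
    have ifs: "integrable lborel f1" "integrable lborel f2" "integrable lborel f3" "integrable lborel f4" "integrable lborel f5"
      unfolding f1_def f2_def f3_def f4_def f5_def using iI1 iI2 iI3 iI4 iI5 by auto
    have iE: "integrable lborel E" unfolding E_def using ifs by simp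
    have intE: "integral\<^sup>L lborel E = integral\<^sup>L lborel f1 + (p - 2) * integral\<^sup>L lborel f2 - integral\<^sup>L lborel f3
        + t * (integral\<^sup>L lborel f4 - integral\<^sup>L lborel f5)"
      unfolding E_def using ifs by (simp add: right_diff_distrib)
    have S': "integral\<^sup>L lborel f1 + (p - 2) * integral\<^sup>L lborel f2 - integral\<^sup>L lborel f3 \<ge> 0"
      using S unfolding f1_def f2_def f3_def .
    have Wk': "integral\<^sup>L lborel f4 = integral\<^sup>L lborel f5"
      using Wk unfolding f4_def f5_def .
    have E0: "integral\<^sup>L lborel E \<ge> 0" using S' Wk' intE by simp
    define A where "A = (\<lambda>x. g x * (\<psi> x / u x) powr q)"
    have iA: "integrable lborel A"
    proof -
      have psu: "\<And>x. 0 \<le> \<psi> x / u x" by (rule divide_nonneg_pos[OF psib(1) ub(1)])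
      have "continuous_on UNIV (\<lambda>x. (\<psi> x / u x) powr q)"
        using psicont ucont un0 psu kk unfolding k_def
        by (intro continuous_on_powr') (auto intro!: continuous_intros)
      then show ?thesis unfolding A_def using psi0
        by (intro li_integrable_mult[OF gli _ K]) auto
    qed
    have An: "AE x in lborel. 0 \<le> A x" using gpos
      by eventually_elim (auto simp: A_def intro!: mult_nonneg_nonneg)
    define F where "F = (\<lambda>x. w x powr theta_a' \<beta> p \<delta> * norm (D\<psi> x) powr (p * theta_a' \<beta> p \<delta>))"
    have Fm: "F \<in> borel_measurable lborel"
    proof -
      have "D\<psi> \<in> borel_measurable lborel" using borel_measurable_continuous_onI[OF psicont(2)] by simp
      then show ?thesis unfolding F_def using wm by measurable
    qed
    have Fn: "\<And>x. F x \<ge> 0" by (simp add: F_def)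
    have LHS: "(\<integral>\<^sup>+x. ennreal (A x) \<partial>lborel) = ennreal (integral\<^sup>L lborel A)"
      by (rule nn_integral_eq_integral[OF iA An])
    show "(\<integral>\<^sup>+x. ennreal (g x * (\<psi> x / u x) powr (2 * \<beta> + p - 1 + \<delta>)) \<partial>lborel)
      \<le> ennreal c * (\<integral>\<^sup>+x. ennreal (w x powr theta_a' \<beta> p \<delta>
                         * norm (D\<psi> x) powr (p * theta_a' \<beta> p \<delta>)) \<partial>lborel)"
    proof (cases "(\<integral>\<^sup>+x. ennreal (F x) \<partial>lborel) = \<infinity>")
      case True
      have "ennreal c * \<infinity> = \<infinity>" using cp by (simp add: ennreal_mult_top)
      then show ?thesis using True unfolding F_def by simp
    next
      case False
      obtain r where r: "(\<integral>\<^sup>+x. ennreal (F x) \<partial>lborel) = ennreal r"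
        using False by (cases "(\<integral>\<^sup>+x. ennreal (F x) \<partial>lborel)") auto
      have iF: "integrable lborel F" by (rule integrableI_nn_integral_finite[OF Fm _ r]) (simp add: Fn)
      have RHS: "(\<integral>\<^sup>+x. ennreal (F x) \<partial>lborel) = ennreal (integral\<^sup>L lborel F)"
        by (rule nn_integral_eq_integral[OF iF]) (simp add: Fn)
      have pw_ae: "AE x in lborel. E x \<le> - \<epsilon> * A x + C2 * F x"
        using wpos gpos gm
      proof eventually_elim
        case (elim x)
        show ?case
          unfolding E_def f1_def f2_def f3_def f4_def f5_def A_def F_def th \<phi>_def D\<phi>_def \<zeta>_def D\<zeta>_def
          by (rule pointwise[OF elim ub psib p b d1 dg tl(1) \<alpha>_def q_def k_def k1 \<kappa>_def kp CW_def \<epsilon>_def C2_def])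
      qed
      have iR: "integrable lborel (\<lambda>x. - \<epsilon> * A x + C2 * F x)" using iA iF by simp
      have "integral\<^sup>L lborel E \<le> integral\<^sup>L lborel (\<lambda>x. - \<epsilon> * A x + C2 * F x)"
        by (rule integral_mono_AE[OF iE iR pw_ae])
      also have "\<dots> = - \<epsilon> * integral\<^sup>L lborel A + C2 * integral\<^sup>L lborel F" using iA iF by simp
      finally have "\<epsilon> * integral\<^sup>L lborel A \<le> C2 * integral\<^sup>L lborel F" using E0 by simp
      then have "integral\<^sup>L lborel A \<le> (C2 / \<epsilon>) * integral\<^sup>L lborel F" using ep by (simp add: field_simps)
      also have "\<dots> \<le> c * integral\<^sup>L lborel F"
        using Fn by (intro mult_right_mono) (auto simp: c_def intro: integral_nonneg_AE)
      finally have ineq: "integral\<^sup>L lborel A \<le> c * integral\<^sup>L lborel F" .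
      have "ennreal (integral\<^sup>L lborel A) \<le> ennreal (c * integral\<^sup>L lborel F)" using ineq by (rule ennreal_leI)
      also have "\<dots> = ennreal c * ennreal (integral\<^sup>L lborel F)" using cp by (intro ennreal_mult') simp
      finally show ?thesis using LHS RHS unfolding A_def F_def q_def by simp
    qed
  qed
qed



end
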